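(* Let $p\ge2$, and let $(V_i)_{i\ge1}$ and the determinants $\mathcal H^{p,m}_n$ be as in the context, with the convention $\mathcal H^{p,m}_{-1}=1$. For $m\in\{0,\ldots,p-1\}$ and $n\in\mathbb N$, \[ V_{pn+m} = \begin{cases} \dfrac{\mathcal H^{p,m}_n\, \mathcal H^{p,m-1}_{n-1}}{\mathcal H^{p,m}_{n-1}\, \mathcal H^{p,m-1}_{n}} & \text{if } m\ge1,\\[2ex] \dfrac{\mathcal H^{p,0}_n\, \mathcal H^{p,p-1}_{n-2}}{\mathcal H^{p,0}_{n-1}\, \mathcal H^{p,p-1}_{n-1}} & \text{if } m=0 \text{ and } n\ge1. \end{cases} \]
   Context: Fix an integer $p\ge 2$. A $p$-constellation is a planar map (proper embedding of a connected graph in the sphere, up to orientation-preserving homeomorphism) whose faces are colored black or white so that adjacent faces have opposite colors, every black face has degree $p$ and every white face has degree a multiple of $p$. Edges are oriented with the white face on their right. Rooted means one edge (root edge) is distinguished; pointed means a vertex (pointed vertex) is distinguished. In a pointed constellation a vertex has type $j$ if $j$ is the minimal length of an oriented path from it to the pointed vertex; an edge has type $j\to j'$ if its origin and endpoint have types $j,j'$. Let $(x_k)_{k\ge1}$ be formal variables, a white face of degree $kp$ having weight $x_k$, and a constellation weighted by the product of its white face weights. For $i\ge1$, $V_i$ is $1$ plus the generating function of pointed rooted $p$-constellations whose root edge is of type $j\to j-1$ for some $j\le i$. A $p$-path is a lattice path in $\mathbb Z\times\mathbb N$ with rises $(1,p-1)$ and falls $(1,-1)$; its weight is the product over its falls of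 $V_i$, $i$ being the starting height of the fall. For $n,r\ge0$, $F_n^{(r)}$ is the sum of the weights of all $p$-paths from $(-r,r)$ to $(np,0)$. For $k\in\mathbb N$ let $q_k=\lfloor k/(p-1)\rfloor$ and $r_k=k-(p-1)q_k$. For $m\in\{0,\ldots,p-1\}$ and $n\in\mathbb N$, $\mathcal H^{p,m}_n:=\det_{0\le i,j\le n}F^{(r_{i+m})}_{q_{i+m}+j}$. *)

theory Defs
  imports "HOL-Library.Poly_Mapping" "HOL-Library.Multiset"
    "HOL-Computational_Algebra.Formal_Power_Series"
    "Jordan_Normal_Form.Determinant"
begin

text \<open>Multivariate formal power series in x_1, x_2, ... with integer coefficients.
  A monomial is a finite multiset of positive integers (k occurring e times means x_k^e);
  a polynomial is a finitely supported map from monomials to integers.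
  A power series is encoded as a formal power series in an auxiliary grading variable t whose
  coefficient of t^n is the (finite) homogeneous part of weighted degree n (x_k has degree k),
  i.e. via the injective ring embedding x_k |-> t^k x_k.  For constellations, n is the number of
  black faces.\<close>

type_synonym gf = "((nat multiset \<Rightarrow>\<^sub>0 int)) fps"

text \<open>A labelled constellation with N edges: edges are 0..<N; \<beta> maps an edge to the next edge
  (in the direction of the edge orientation) around its black face, \<omega> likewise around its white
  face. Both faces are directed cycles since each edge has black face on its left and white face on
  its right. The origin (tail) of edge e is the vertex given by the orbit of e under \<omega> o \<beta>^-1
  (the rotation of outgoing edges around a vertex); the endpoint (head) of e is the tail of \<beta> e.\<close>

definition porbit :: "(nat \<Rightarrow> nat) \<Rightarrow> nat \<Rightarrow> nat set" where
  "porbit f e = {(f ^^ k) e | k. True}"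

definition vrot :: "(nat \<Rightarrow> nat) \<Rightarrow> (nat \<Rightarrow> nat) \<Rightarrow> nat \<Rightarrow> nat" where
  "vrot \<beta> \<omega> = \<omega> \<circ> inv_into UNIV \<beta>"

definition tailv :: "(nat \<Rightarrow> nat) \<Rightarrow> (nat \<Rightarrow> nat) \<Rightarrow> nat \<Rightarrow> nat set" where
  "tailv \<beta> \<omega> e = porbit (vrot \<beta> \<omega>) e"

definition headv :: "(nat \<Rightarrow> nat) \<Rightarrow> (nat \<Rightarrow> nat) \<Rightarrow> nat \<Rightarrow> nat set" where
  "headv \<beta> \<omega> e = tailv \<beta> \<omega> (\<beta> e)"

definition vertices :: "nat \<Rightarrow> (nat \<Rightarrow> nat) \<Rightarrow> (nat \<Rightarrow> nat) \<Rightarrow> nat set set" where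
  "vertices N \<beta> \<omega> = tailv \<beta> \<omega> ` {0..<N}"

definition black_faces :: "nat \<Rightarrow> (nat \<Rightarrow> nat) \<Rightarrow> nat set set" where
  "black_faces N \<beta> = porbit \<beta> ` {0..<N}"

definition white_faces :: "nat \<Rightarrow> (nat \<Rightarrow> nat) \<Rightarrow> nat set set" where
  "white_faces N \<omega> = porbit \<omega> ` {0..<N}"

text \<open>p-constellation on N labelled edges: faces coloured, black faces of degree p,
  white faces of degree a multiple of p, connected, planar (Euler characteristic 2).\<close>

definition is_constellation :: "nat \<Rightarrow> nat \<Rightarrow> (nat \<Rightarrow> nat) \<Rightarrow> (nat \<Rightarrow> nat) \<Rightarrow> bool" where
  "is_constellation p N \<beta> \<omega> \<longleftrightarrow>
     \<beta> permutes {0..<N} \<and> \<omega> permutes {0..<N} \<and>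
     (\<forall>e<N. card (porbit \<beta> e) = p) \<and>
     (\<forall>e<N. p dvd card (porbit \<omega> e)) \<and>
     (\<forall>e<N. \<forall>e'<N. (\<lambda>a b. b = \<beta> a \<or> b = \<omega> a)\<^sup>*\<^sup>* e e') \<and>
     card (vertices N \<beta> \<omega>) + card (black_faces N \<beta>) + card (white_faces N \<omega>) = N + 2"

text \<open>Oriented step relation between vertices and the type of a vertex (distance to the pointed vertex v0).\<close>

definition vstep :: "nat \<Rightarrow> (nat \<Rightarrow> nat) \<Rightarrow> (nat \<Rightarrow> nat) \<Rightarrow> nat set \<Rightarrow> nat set \<Rightarrow> bool" where
  "vstep N \<beta> \<omega> u w \<longleftrightarrow> (\<exists>e<N. tailv \<beta> \<omega> e = u \<and> headv \<beta> \<omega> e = w)"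

definition vtype :: "nat \<Rightarrow> (nat \<Rightarrow> nat) \<Rightarrow> (nat \<Rightarrow> nat) \<Rightarrow> nat set \<Rightarrow> nat set \<Rightarrow> nat" where
  "vtype N \<beta> \<omega> v0 u = (LEAST k. (vstep N \<beta> \<omega> ^^ k) u v0)"

text \<open>Labelled pointed rooted p-constellations (\<beta>, \<omega>, root edge, pointed vertex) with N edges
  whose root edge has type j -> j-1 for some j \<le> i.\<close>

type_synonym pr_const = "(nat \<Rightarrow> nat) \<times> (nat \<Rightarrow> nat) \<times> nat \<times> nat set"

definition PR :: "nat \<Rightarrow> nat \<Rightarrow> nat \<Rightarrow> pr_const set" where
  "PR p i N = {(\<beta>, \<omega>, r, v0). is_constellation p N \<beta> \<omega> \<and> r < N \<and> v0 \<in> vertices N \<beta> \<omega> \<and>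
      (\<exists>j. j \<le> i \<and> vtype N \<beta> \<omega> v0 (tailv \<beta> \<omega> r) = j \<and>
             vtype N \<beta> \<omega> v0 (headv \<beta> \<omega> r) + 1 = j)}"

text \<open>Isomorphism = relabelling of the edges (orientation-preserving homeomorphism of the sphere),
  preserving root edge and pointed vertex.\<close>

definition pr_iso :: "nat \<Rightarrow> pr_const \<Rightarrow> pr_const \<Rightarrow> bool" where
  "pr_iso N s s' \<longleftrightarrow> (case s of (\<beta>, \<omega>, r, v0) \<Rightarrow> case s' of (\<beta>', \<omega>', r', v0') \<Rightarrow>
     (\<exists>\<pi>. \<pi> permutes {0..<N} \<and> \<beta>' = \<pi> \<circ> \<beta> \<circ> inv_into UNIV \<pi> \<and> \<omega>' = \<pi> \<circ> \<omega> \<circ> inv_into UNIV \<pi> \<and>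
          r' = \<pi> r \<and> v0' = \<pi> ` v0))"

definition PR_classes :: "nat \<Rightarrow> nat \<Rightarrow> nat \<Rightarrow> pr_const set set" where
  "PR_classes p i N = PR p i N // {(s, s'). s \<in> PR p i N \<and> s' \<in> PR p i N \<and> pr_iso N s s'}"

text \<open>Weight monomial: product of x_k over white faces of degree kp.\<close>

definition wmono :: "nat \<Rightarrow> nat \<Rightarrow> pr_const \<Rightarrow> nat multiset" where
  "wmono p N s = (case s of (\<beta>, \<omega>, r, v0) \<Rightarrow>
      image_mset (\<lambda>F. card F div p) (mset_set (white_faces N \<omega>)))"

text \<open>V_i = 1 + generating function of pointed rooted p-constellations with root edge of type
  j -> j-1 for some j \<le> i.  A constellation with n black faces has N = p n edges.\<close>

definition Vgf :: "nat \<Rightarrow> nat \<Rightarrow> gf" where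
  "Vgf p i = 1 + Abs_fps (\<lambda>n. \<Sum>c\<in>PR_classes p i (p * n).
                                Poly_Mapping.single (wmono p (p * n) (SOME s. s \<in> c)) 1)"

text \<open>A p-path is encoded by its list of steps (True = rise (1,p-1), False = fall (1,-1)),
  together with its starting height; it must stay at heights \<ge> 0.\<close>

fun ppath_ok :: "nat \<Rightarrow> nat \<Rightarrow> nat \<Rightarrow> bool list \<Rightarrow> bool" where
  "ppath_ok p h e [] \<longleftrightarrow> h = e"
| "ppath_ok p h e (True # s) \<longleftrightarrow> ppath_ok p (h + (p - 1)) e s"
| "ppath_ok p h e (False # s) \<longleftrightarrow> 1 \<le> h \<and> ppath_ok p (h - 1) e s"

fun ppath_wt :: "nat \<Rightarrow> (nat \<Rightarrow> 'a::comm_ring_1) \<Rightarrow> nat \<Rightarrow> bool list \<Rightarrow> 'a" where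
  "ppath_wt p V h [] = 1"
| "ppath_wt p V h (True # s) = ppath_wt p V (h + (p - 1)) s"
| "ppath_wt p V h (False # s) = V h * ppath_wt p V (h - 1) s"

text \<open>F_n^{(r)}: sum of weights of p-paths from (-r, r) to (np, 0).\<close>

definition Fpath :: "nat \<Rightarrow> (nat \<Rightarrow> 'a::comm_ring_1) \<Rightarrow> nat \<Rightarrow> nat \<Rightarrow> 'a" where
  "Fpath p V n r = (\<Sum>s\<in>{s. length s = n * p + r \<and> ppath_ok p r 0 s}. ppath_wt p V r s)"

definition qk :: "nat \<Rightarrow> nat \<Rightarrow> nat" where "qk p k = k div (p - 1)"
definition rk :: "nat \<Rightarrow> nat \<Rightarrow> nat" where "rk p k = k - (p - 1) * qk p k"

definition Hdet :: "nat \<Rightarrow> (nat \<Rightarrow> 'a::comm_ring_1) \<Rightarrow> nat \<Rightarrow> int \<Rightarrow> 'a" where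
  "Hdet p V m n = (if n = -1 then 1 else
     det (mat (nat n + 1) (nat n + 1)
       (\<lambda>(i, j). Fpath p V (qk p (i + m) + j) (rk p (i + m)))))"

end

theory Submission
  imports Defs
begin


fun Wr :: "nat \<Rightarrow> (nat \<Rightarrow> 'a::comm_ring_1) \<Rightarrow> nat \<Rightarrow> nat \<Rightarrow> nat \<Rightarrow> 'a" where
  "Wr p V h 0 h' = (if h = h' then 1 else 0)"
| "Wr p V h (Suc l) h' = Wr p V (h + (p - 1)) l h' + (if 1 \<le> h then V h * Wr p V (h - 1) l h' else 0)"

lemma finite_len: "finite {s::bool list. length s = l \<and> P s}"
proof -
  have "finite {s::bool list. set s \<subseteq> UNIV \<and> length s = l}"
    by (rule finite_lists_length_eq) simp
  then show ?thesis by (rule finite_subset[rotated]) auto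
qed

lemma W_eq: "(\<Sum>s\<in>{s. length s = l \<and> ppath_ok p h h' s}. ppath_wt p V h s) = Wr p V h l h'"
proof (induction l arbitrary: h)
  case 0
  have "{s::bool list. length s = 0 \<and> ppath_ok p h h' s} = (if h = h' then {[]} else {})" by auto
  then show ?case by simp
next
  case (Suc l)
  let ?A = "{s. length s = l \<and> ppath_ok p (h + (p - 1)) h' s}"
  let ?B = "if 1 \<le> h then {s. length s = l \<and> ppath_ok p (h - 1) h' s} else {}"
  have eq: "{s. length s = Suc l \<and> ppath_ok p h h' s} = Cons True ` ?A \<union> Cons False ` ?B"
  proof -
    have "s \<in> {s. length s = Suc l \<and> ppath_ok p h h' s} \<longleftrightarrow> s \<in> Cons True ` ?A \<union> Cons False ` ?B" for s
    proof (cases s)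
      case (Cons b t) then show ?thesis by (cases b) auto
    qed auto
    then show ?thesis by blast
  qed
  have fA: "finite ?A" by (rule finite_len)
  have fB: "finite ?B" using finite_len by simp
  have "(\<Sum>s\<in>{s. length s = Suc l \<and> ppath_ok p h h' s}. ppath_wt p V h s)
      = (\<Sum>s\<in>Cons True ` ?A. ppath_wt p V h s) + (\<Sum>s\<in>Cons False ` ?B. ppath_wt p V h s)"
    unfolding eq by (rule sum.union_disjoint) (use fA fB in auto)
  also have "(\<Sum>s\<in>Cons True ` ?A. ppath_wt p V h s) = Wr p V (h + (p - 1)) l h'"
    by (subst sum.reindex) (auto simp: Suc.IH)
  also have "(\<Sum>s\<in>Cons False ` ?B. ppath_wt p V h s) = (if 1 \<le> h then V h * Wr p V (h - 1) l h' else 0)"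
    by (subst sum.reindex) (auto simp: Suc.IH sum_distrib_left[symmetric])
  finally show ?case by simp
qed

lemma Fpath_Wr: "Fpath p V n r = Wr p V r (n * p + r) 0"
  unfolding Fpath_def by (rule W_eq)

lemma Wr_nz: "Wr p V h l h' \<noteq> 0 \<Longrightarrow> p \<ge> 1 \<Longrightarrow> \<exists>u\<le>l. h' + l = h + u * p"
proof (induction l arbitrary: h)
  case 0 then show ?case by (auto split: if_splits)
next
  case (Suc l)
  show ?case
  proof (cases "Wr p V (h + (p - 1)) l h' = 0")
    case True
    then have "1 \<le> h" "Wr p V (h - 1) l h' \<noteq> 0" using Suc.prems by (auto split: if_splits)
    then obtain u where "u \<le> l" "h' + l = h - 1 + u * p" using Suc by blast
    then show ?thesis using \<open>1 \<le> h\<close> by (intro exI[of _ u]) auto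
  next
    case False
    then obtain u where "u \<le> l" "h' + l = h + (p - 1) + u * p" using Suc by blast
    then show ?thesis using Suc.prems by (intro exI[of _ "Suc u"]) auto
  qed
qed

lemma Wr_cut:
  assumes "finite S" "{..h + l1 * (p - 1)} \<subseteq> S"
  shows "Wr p V h (l1 + l2) h'' = (\<Sum>h'\<in>S. Wr p V h l1 h' * Wr p V h' l2 h'')"
  using assms(2)
proof (induction l1 arbitrary: h)
  case 0
  then have "h \<in> S" by auto
  have "(\<Sum>h'\<in>S. Wr p V h 0 h' * Wr p V h' l2 h'') = (\<Sum>h'\<in>S. if h = h' then Wr p V h' l2 h'' else 0)"
    by (rule sum.cong) auto
  also have "\<dots> = Wr p V h l2 h''" using \<open>h \<in> S\<close> assms(1) by (simp add: sum.delta)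
  finally show ?case by simp
next
  case (Suc l1)
  have "h + (p - 1) + l1 * (p - 1) = h + Suc l1 * (p - 1)" by simp
  then have s1: "{..h + (p - 1) + l1 * (p - 1)} \<subseteq> S" using Suc.prems by metis
  have s2: "{..h - 1 + l1 * (p - 1)} \<subseteq> S" using Suc.prems by auto
  have "Wr p V h (Suc l1 + l2) h'' = Wr p V (h + (p - 1)) (l1 + l2) h'' + (if 1 \<le> h then V h * Wr p V (h - 1) (l1 + l2) h'' else 0)"
    by simp
  also have "\<dots> = (\<Sum>h'\<in>S. Wr p V (h + (p - 1)) l1 h' * Wr p V h' l2 h'') +
      (if 1 \<le> h then V h * (\<Sum>h'\<in>S. Wr p V (h - 1) l1 h' * Wr p V h' l2 h'') else 0)"
    using Suc.IH[OF s1] Suc.IH[OF s2] by simp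
  also have "\<dots> = (\<Sum>h'\<in>S. Wr p V h (Suc l1) h' * Wr p V h' l2 h'')"
    by (simp add: algebra_simps sum.distrib sum_distrib_left)
  finally show ?case .
qed

lemma Wr_zero_high: "p \<ge> 1 \<Longrightarrow> h' > h + l * (p - 1) \<Longrightarrow> Wr p V h l h' = 0"
proof (rule ccontr)
  assume "p \<ge> 1" "h' > h + l * (p - 1)" "Wr p V h l h' \<noteq> 0"
  then obtain u where "u \<le> l" "h' + l = h + u * p" using Wr_nz by blast
  moreover have "u * p \<le> l * p" using \<open>u \<le> l\<close> by simp
  ultimately show False using \<open>h' > h + l * (p - 1)\<close> \<open>p \<ge> 1\<close>
    by (cases p) (auto simp: algebra_simps)
qed

lemma Wr_rises: "p \<ge> 1 \<Longrightarrow> Wr p V h l (h + l * (p - 1)) = 1"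
proof (induction l arbitrary: h)
  case 0 then show ?case by simp
next
  case (Suc l)
  have "Wr p V (h + (p - 1)) l (h + Suc l * (p - 1)) = 1"
  proof -
    have "h + Suc l * (p - 1) = (h + (p - 1)) + l * (p - 1)" by simp
    then show ?thesis using Suc.IH[of "h + (p - 1)"] Suc.prems by metis
  qed
  moreover have "Wr p V (h - 1) l (h + Suc l * (p - 1)) = 0" if "1 \<le> h"
    by (rule Wr_zero_high) (use Suc.prems that in auto)
  ultimately show ?case by simp
qed

lemma Wr_falls: "p \<ge> 1 \<Longrightarrow> Wr p V h h 0 = (\<Prod>i\<in>{1..h}. V i)"
proof (induction h)
  case 0 then show ?case by simp
next
  case (Suc h)
  have "Wr p V (Suc h + (p - 1)) h 0 = 0"
  proof (rule ccontr)
    assume "Wr p V (Suc h + (p - 1)) h 0 \<noteq> 0"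
    then obtain u where "0 + h = Suc h + (p - 1) + u * p" using Wr_nz Suc.prems by blast
    then show False by simp
  qed
  then show ?case using Suc by (simp add: prod.nat_ivl_Suc' mult.commute)
qed



definition Dp :: "nat \<Rightarrow> (nat \<Rightarrow> 'a::comm_ring_1) \<Rightarrow> nat \<Rightarrow> nat \<Rightarrow> 'a" where
  "Dp p V m N = (\<Prod>j<N. \<Prod>h\<in>{1..j * p + m}. V h)"

lemma qr_facts:
  assumes "p \<ge> 2"
  shows "(p - 1) * qk p a + rk p a = a" "rk p a < p - 1"
proof -
  have c: "p - 1 > 0" using assms by simp
  have "rk p a = a mod (p - 1)" unfolding rk_def qk_def by (simp add: minus_mult_div_eq_mod)
  then show "rk p a < p - 1" using c by simp
  show "(p - 1) * qk p a + rk p a = a" unfolding rk_def qk_def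
    by (simp add: mult.commute)
qed

lemma Hdet_main:
  fixes V :: "nat \<Rightarrow> 'a::comm_ring_1"
  assumes p2: "p \<ge> 2" and mp: "m \<le> p - 1"
  shows "Hdet p V m (int n) = Dp p V m (Suc n)"
proof -
  define N where "N = Suc n"
  have p0: "p \<ge> 1" using p2 by simp
  define q where "q i = qk p (i + m)" for i
  define r where "r i = rk p (i + m)" for i
  define l where "l i = q i * p + r i - m" for i
  have qr: "(p - 1) * q i + r i = i + m" "r i < p - 1" for i
    unfolding q_def r_def using qr_facts[OF p2] by auto
  have qp: "(p - 1) * q i + q i = q i * p" for i using p0
    by (cases p) (auto simp: algebra_simps)
  have lm: "l i + m = q i * p + r i" for i
    using qr(1)[of i] qp[of i] unfolding l_def by linarith
  define M where "M = mat N N (\<lambda>(i, j). Fpath p V (qk p (i + m) + j) (rk p (i + m)))"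
  define L where "L = mat N N (\<lambda>(i, k). Wr p V (r i) (l i) (k * p + m))"
  define Q where "Q = mat N N (\<lambda>(k, j). Wr p V (k * p + m) (j * p + m) 0)"
  have H: "Hdet p V m (int n) = det M" unfolding Hdet_def M_def N_def by simp
  have entry: "Wr p V (r i) ((q i + j) * p + r i) 0 = (\<Sum>k<N. Wr p V (r i) (l i) (k * p + m) * Wr p V (k * p + m) (j * p + m) 0)"
    if "j < N" for i j
  proof -
    define g where "g k = k * p + m" for k
    define f where "f h = Wr p V (r i) (l i) h * Wr p V h (j * p + m) 0" for h
    define T where "T = {..r i + l i * (p - 1)} \<union> g ` {..<N}"
    have len: "(q i + j) * p + r i = l i + (j * p + m)" using lm[of i] by (simp add: algebra_simps)
    have "Wr p V (r i) ((q i + j) * p + r i) 0 = (\<Sum>h\<in>T. f h)"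
      unfolding len f_def by (rule Wr_cut) (auto simp: T_def)
    also have "\<dots> = (\<Sum>h\<in>g ` {..<N}. f h)"
    proof (rule sum.mono_neutral_right)
      show "finite T" by (simp add: T_def)
      show "g ` {..<N} \<subseteq> T" by (auto simp: T_def)
      show "\<forall>h\<in>T - g ` {..<N}. f h = 0"
      proof
        fix h assume hT: "h \<in> T - g ` {..<N}"
        show "f h = 0"
        proof (rule ccontr)
          assume "f h \<noteq> 0"
          then have a1: "Wr p V (r i) (l i) h \<noteq> 0" and a2: "Wr p V h (j * p + m) 0 \<noteq> 0"
            unfolding f_def by auto
          obtain u where u: "h + l i = r i + u * p" using Wr_nz[OF a1 p0] by blast
          obtain u' where u': "0 + (j * p + m) = h + u' * p" using Wr_nz[OF a2 p0] by blast
          have e: "h + q i * p = m + u * p" using u lm[of i] by linarith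
          show False
          proof (cases "q i \<le> u")
            case True
            then have "u * p = q i * p + (u - q i) * p" by (simp add: add_mult_distrib[symmetric])
            then have hh: "h = g (u - q i)" using e unfolding g_def by linarith
            have "(u - q i) * p + u' * p = j * p" using u' hh unfolding g_def by linarith
            then have "((u - q i) + u') * p = j * p" by (simp add: add_mult_distrib)
            then have "(u - q i) + u' = j" using p0 by simp
            then have "u - q i < N" using that by linarith
            then show False using hT hh by auto
          next
            case False
            then have "q i * p = u * p + (q i - u) * p" by (simp add: add_mult_distrib[symmetric])
            moreover have "q i - u \<ge> 1" using False by linarith
            then have "(q i - u) * p \<ge> 1 * p" by (rule mult_le_mono1)
            then have "(q i - u) * p \<ge> p" by simp
            ultimately show False using e mp p0 by linarith
          qed
        qed
      qed
    qed
    also have "\<dots> = (\<Sum>k<N. f (g k))"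
      by (subst sum.reindex) (use p0 in \<open>auto simp: inj_on_def g_def\<close>)
    finally show ?thesis unfolding f_def g_def .
  qed
  have MLQ: "M = L * Q"
  proof (rule eq_matI)
    fix i j assume ij: "i < dim_row (L * Q)" "j < dim_col (L * Q)"
    then have ij': "i < N" "j < N" by (auto simp: L_def Q_def)
    have "M $$ (i, j) = Wr p V (r i) ((q i + j) * p + r i) 0"
      using ij' by (simp add: M_def Fpath_Wr q_def r_def)
    also have "\<dots> = (\<Sum>k<N. Wr p V (r i) (l i) (k * p + m) * Wr p V (k * p + m) (j * p + m) 0)"
      by (rule entry) (rule ij'(2))
    also have "\<dots> = (L * Q) $$ (i, j)"
      using ij' by (simp add: L_def Q_def scalar_prod_def atLeast0LessThan)
    finally show "M $$ (i, j) = (L * Q) $$ (i, j)" .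
  qed (auto simp: M_def L_def Q_def)
  have Lc: "L \<in> carrier_mat N N" and Qc: "Q \<in> carrier_mat N N" by (auto simp: L_def Q_def)
  have detL: "det L = 1"
  proof -
    have "det L = prod_list (diag_mat L)"
    proof (rule det_lower_triangular[OF _ Lc])
      fix i k assume ik: "i < k" "k < N"
      show "L $$ (i, k) = 0"
      proof (rule ccontr)
        assume "L $$ (i, k) \<noteq> 0"
        then have "Wr p V (r i) (l i) (k * p + m) \<noteq> 0" using ik by (simp add: L_def)
        then obtain u where u: "u \<le> l i" "k * p + m + l i = r i + u * p" using Wr_nz p0 by blast
        have "(k + q i) * p = u * p" using u(2) lm[of i] by (simp add: algebra_simps)
        then have "k + q i = u" using p0 by simp
        then have "k + q i + m \<le> q i * p + r i" using u(1) lm[of i] by linarith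
        then show False using qr(1)[of i] qp[of i] ik by linarith
      qed
    qed
    also have "\<dots> = 1"
    proof -
      have "L $$ (i, i) = 1" if "i < N" for i
      proof -
        have "int (l i + m) = int (q i * p + r i)" using lm[of i] by simp
        then have e1: "int (l i) = int (q i) * int p + int (r i) - int m" by simp
        have a: "int ((p - 1) * q i) = (int p - 1) * int (q i)" using p0 by (simp add: of_nat_diff)
        have "int ((p - 1) * q i) + int (r i) = int i + int m" using qr(1)[of i] by (metis of_nat_add)
        then have "int i = (int p - 1) * int (q i) + int (r i) - int m" using a by linarith
        then have e2: "int i = int (q i) * (int p - 1) + int (r i) - int m" by (simp add: mult.commute)
        have b: "int (r i + l i * (p - 1)) = int (r i) + int (l i) * (int p - 1)"
          using p0 by (simp add: of_nat_diff)
        have c: "int (r i) + int (l i) * (int p - 1) = int i * int p + int m"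
          unfolding e1 e2 by (simp add: algebra_simps)
        have "int (r i + l i * (p - 1)) = int (i * p + m)"
          using b c by simp
        then have "r i + l i * (p - 1) = i * p + m" by linarith
        then show ?thesis using that Wr_rises[OF p0, of V "r i" "l i"] by (simp add: L_def)
      qed
      then show ?thesis by (simp add: prod_list_diag_prod L_def)
    qed
    finally show ?thesis .
  qed
  have detQ: "det Q = Dp p V m N"
  proof -
    have "det Q = prod_list (diag_mat Q)"
    proof (rule det_upper_triangular[OF _ Qc])
      show "upper_triangular Q"
      proof
        fix k j assume kj: "j < k" "k < dim_row Q"
        show "Q $$ (k, j) = 0"
        proof (rule ccontr)
          assume "Q $$ (k, j) \<noteq> 0"
          then have "Wr p V (k * p + m) (j * p + m) 0 \<noteq> 0" using kj by (simp add: Q_def)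
          then obtain u where "0 + (j * p + m) = k * p + m + u * p" using Wr_nz p0 by blast
          then have "j * p \<ge> k * p" by linarith
          then show False using kj p0 by simp
        qed
      qed
    qed
    also have "\<dots> = Dp p V m N"
      by (simp add: prod_list_diag_prod Q_def Dp_def Wr_falls[OF p0] atLeast0LessThan)
    finally show ?thesis .
  qed
  show ?thesis using H MLQ det_mult[OF Lc Qc] detL detQ N_def by simp
qed



lemma Hdet_m1: "p \<ge> 2 \<Longrightarrow> m \<le> p - 1 \<Longrightarrow> Hdet p V m (int k - 1) = Dp p V m k"
proof (cases k)
  case 0 then show ?thesis by (simp add: Hdet_def Dp_def)
next
  case (Suc k')
  assume "p \<ge> 2" "m \<le> p - 1"
  then show ?thesis using Hdet_main[of p m V k'] Suc by simp
qed

lemma Dp_Suc: "Dp p V m (Suc n) = Dp p V m n * (\<Prod>h\<in>{1..n * p + m}. V h)"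
  by (simp add: Dp_def)

lemma prod_upto_Suc: "(\<Prod>h\<in>{1..Suc k}. V h) = (\<Prod>h\<in>{1..k}. V h) * V (Suc k)"
  by (simp add: prod.nat_ivl_Suc')

lemma Vgf_0: "fps_nth (Vgf p i) 0 = 1"
proof -
  have "PR p i 0 = {}" by (auto simp: PR_def is_constellation_def vertices_def black_faces_def white_faces_def)
  then show ?thesis by (simp add: Vgf_def PR_classes_def)
qed

lemma prod_nth0: "finite A \<Longrightarrow> fps_nth (\<Prod>x\<in>A. f x :: 'a::comm_ring_1 fps) 0 = (\<Prod>x\<in>A. fps_nth (f x) 0)"
  by (induction A rule: finite_induct) auto

lemma Dp_nz: "fps_nth (Dp p (Vgf p) m k) 0 = 1"
  by (simp add: Dp_def prod_nth0 Vgf_0)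

lemma Dp_ne0: "Dp p (Vgf p) m k * Dp p (Vgf p) m' k' \<noteq> 0"
proof
  assume "Dp p (Vgf p) m k * Dp p (Vgf p) m' k' = 0"
  then have "fps_nth (Dp p (Vgf p) m k * Dp p (Vgf p) m' k') 0 = 0" by simp
  then show False by (simp add: Dp_nz)
qed

theorem corollary1:
  fixes p m n :: nat
  assumes "p \<ge> 2" and "m \<le> p - 1"
  shows "(1 \<le> m \<longrightarrow>
            Hdet p (Vgf p) m (int n - 1) * Hdet p (Vgf p) (m - 1) (int n) \<noteq> 0 \<and>
            Vgf p (p * n + m) * (Hdet p (Vgf p) m (int n - 1) * Hdet p (Vgf p) (m - 1) (int n))
              = Hdet p (Vgf p) m (int n) * Hdet p (Vgf p) (m - 1) (int n - 1))
       \<and> (m = 0 \<and> 1 \<le> n \<longrightarrow>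
            Hdet p (Vgf p) 0 (int n - 1) * Hdet p (Vgf p) (p - 1) (int n - 1) \<noteq> 0 \<and>
            Vgf p (p * n) * (Hdet p (Vgf p) 0 (int n - 1) * Hdet p (Vgf p) (p - 1) (int n - 1))
              = Hdet p (Vgf p) 0 (int n) * Hdet p (Vgf p) (p - 1) (int n - 2))"
proof (intro conjI impI)
  let ?V = "Vgf p"
  have m1: "m - 1 \<le> p - 1" using assms by simp
  have H0: "Hdet p ?V k (int n) = Dp p ?V k (Suc n)" if "k \<le> p - 1" for k
    using Hdet_main[OF assms(1) that] .
  have Hm: "Hdet p ?V k (int n - 1) = Dp p ?V k n" if "k \<le> p - 1" for k
    using Hdet_m1[OF assms(1) that] .
  {
    assume "1 \<le> m"
    show "Hdet p ?V m (int n - 1) * Hdet p ?V (m - 1) (int n) \<noteq> 0"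
      using Hm[OF assms(2)] H0[OF m1] Dp_ne0 by simp
    obtain m' where m': "m = Suc m'" using \<open>1 \<le> m\<close> by (cases m) auto
    have e: "n * p + m = Suc (n * p + m')" using m' by simp
    show "?V (p * n + m) * (Hdet p ?V m (int n - 1) * Hdet p ?V (m - 1) (int n))
        = Hdet p ?V m (int n) * Hdet p ?V (m - 1) (int n - 1)"
      unfolding Hm[OF assms(2)] H0[OF m1] H0[OF assms(2)] Hm[OF m1] Dp_Suc e prod_upto_Suc
      using m' by (simp add: algebra_simps)
  }
  {
    assume "m = 0 \<and> 1 \<le> n"
    then obtain n' where n': "n = Suc n'" by (cases n) auto
    have pp: "p - 1 \<le> p - 1" by simp
    show "Hdet p ?V 0 (int n - 1) * Hdet p ?V (p - 1) (int n - 1) \<noteq> 0"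
      using Hm[of 0] Hm[OF pp] Dp_ne0 by simp
    have i2: "int n - 2 = int n' - 1" using n' by simp
    have H2: "Hdet p ?V (p - 1) (int n - 2) = Dp p ?V (p - 1) n'"
      unfolding i2 using Hdet_m1[OF assms(1) pp] .
    have e: "n * p = Suc (n' * p + (p - 1))" using n' assms(1) by (cases p) auto
    have A1: "Hdet p ?V 0 (int n - 1) = Dp p ?V 0 n" using Hm[of 0] by simp
    have A2: "Hdet p ?V (p - 1) (int n - 1) = Dp p ?V (p - 1) n" using Hm[OF pp] .
    have A3: "Hdet p ?V 0 (int n) = Dp p ?V 0 (Suc n)" using H0[of 0] by simp
    have D1: "Dp p ?V 0 (Suc n) = Dp p ?V 0 n * (\<Prod>h\<in>{1..n' * p + (p - 1)}. ?V h) * ?V (p * n)"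
      unfolding Dp_Suc using e by (simp add: prod_upto_Suc mult.commute mult.left_commute)
    have D2: "Dp p ?V (p - 1) n = Dp p ?V (p - 1) n' * (\<Prod>h\<in>{1..n' * p + (p - 1)}. ?V h)"
      unfolding n' Dp_Suc ..
    show "?V (p * n) * (Hdet p ?V 0 (int n - 1) * Hdet p ?V (p - 1) (int n - 1))
        = Hdet p ?V 0 (int n) * Hdet p ?V (p - 1) (int n - 2)"
      unfolding A1 A2 A3 H2 D1 D2 by (simp add: algebra_simps)
  }
qed

end
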